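(* There exists a $\mathrm{CMSO}[2]$-formula $\mathrm{repr}_{A,B}(a,X)$, over the vocabulary consisting of the unary set predicate $\mathsf{SET}$ and two unary relations $A,B$, with a free first-order variable $a$ and a free monadic variable $X$, such that the following holds. Let $(U,\mathcal{S})$ be a laminar set system with laminar tree $T$, and let $(A,B)$ be a bi-colouring of $L(T)=U$ identifying a set $S$ of inner nodes of $T$. Then, in the structure with universe $U$, $\mathsf{SET}$ interpreted as $\mathcal{S}$ and the unary relations interpreted as $A$ and $B$, the formula $\mathrm{repr}_{A,B}(a,X)$ is satisfied exactly when $X$ is an inner node of $T$ that belongs to $S$ and $a$ is its $A$-representative.
   Context: $\mathrm{CMSO}[2]$ is monadic second-order logic (quantification over elements and over subsets of the universe) extended with a unary set predicate true of a set iff its size is even. A set system is a pair $(U,\mathcal{S})$ with $U$ finite, $\mathcal{S}$ a family of subsets of $U$ with $\emptyset\notin\mathcal{S}$, $U\in\mathcal{S}$, $\{a\}\in\mathcal{S}$ for all $a\in U$; it is laminar if no two members overlap (intersect with neither containing the other). Its laminar tree $T$ is the rooted tree whose nodes are the members of $\mathcal{S}$, root $U$, $X$ a child of $Y$ iff $X\subsetneq Y$ with no member strictly between; leaves are the singletons, identified with elements of $U$ (so a node is the set of leaves below it). Every node is its own ancestor. A bi-colouring is a pair $(A,B)$ of disjoint subsets of $L(T)$ of equal size. A pair $(\pi,\sigma)$ of injections from a set $S$ of inner nodes to $L(T)$ identifies $S$ if each $s\in S$ is the least common ancestor of $\pi(s)$ and $\sigma(s)$; a node $x$ is $s$-requested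 if it lies on the path from $\pi(s)$ to $\sigma(s)$; the pair has unique request if each node is $s$-requested for at most one $s$. $(A,B)$ identifies $S$ if some such pair with unique request has $\pi(S)=A$ and $\sigma(S)=B$; this pair is then unique, and $\pi(s)$ is called the $A$-representative of $s\in S$. *)

theory Defs
  imports Main
begin

datatype cmso2 =
    FEq nat nat
  | FMem nat nat
  | FSet nat
  | FA nat
  | FB nat
  | FEven nat
  | FNot cmso2
  | FAnd cmso2 cmso2
  | FOr cmso2 cmso2
  | FExFO nat cmso2
  | FExSO nat cmso2

fun sat :: "'a set \<Rightarrow> 'a set set \<Rightarrow> 'a set \<Rightarrow> 'a set \<Rightarrow>
            (nat \<Rightarrow> 'a) \<Rightarrow> (nat \<Rightarrow> 'a set) \<Rightarrow> cmso2 \<Rightarrow> bool" where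
  "sat U Sys RA RB v V (FEq i j) = (v i = v j)"
| "sat U Sys RA RB v V (FMem i j) = (v i \<in> V j)"
| "sat U Sys RA RB v V (FSet j) = (V j \<in> Sys)"
| "sat U Sys RA RB v V (FA i) = (v i \<in> RA)"
| "sat U Sys RA RB v V (FB i) = (v i \<in> RB)"
| "sat U Sys RA RB v V (FEven j) = even (card (V j))"
| "sat U Sys RA RB v V (FNot \<phi>) = (\<not> sat U Sys RA RB v V \<phi>)"
| "sat U Sys RA RB v V (FAnd \<phi> \<psi>) = (sat U Sys RA RB v V \<phi> \<and> sat U Sys RA RB v V \<psi>)"
| "sat U Sys RA RB v V (FOr \<phi> \<psi>) = (sat U Sys RA RB v V \<phi> \<or> sat U Sys RA RB v V \<psi>)"
| "sat U Sys RA RB v V (FExFO i \<phi>) = (\<exists>a\<in>U. sat U Sys RA RB (v(i := a)) V \<phi>)"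
| "sat U Sys RA RB v V (FExSO j \<phi>) = (\<exists>X. X \<subseteq> U \<and> sat U Sys RA RB v (V(j := X)) \<phi>)"

definition set_system :: "'a set \<Rightarrow> 'a set set \<Rightarrow> bool" where
  "set_system U Sys \<longleftrightarrow> finite U \<and> Sys \<subseteq> Pow U \<and> {} \<notin> Sys \<and> U \<in> Sys \<and>
     (\<forall>a\<in>U. {a} \<in> Sys)"

definition overlap :: "'a set \<Rightarrow> 'a set \<Rightarrow> bool" where
  "overlap X Y \<longleftrightarrow> X \<inter> Y \<noteq> {} \<and> \<not> X \<subseteq> Y \<and> \<not> Y \<subseteq> X"

definition laminar :: "'a set \<Rightarrow> 'a set set \<Rightarrow> bool" where
  "laminar U Sys \<longleftrightarrow> set_system U Sys \<and> (\<forall>X\<in>Sys. \<forall>Y\<in>Sys. \<not> overlap X Y)"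

text \<open>Laminar tree: nodes are the members of Sys; X is a child of Y iff X is a proper
  subset of Y with no member strictly between.\<close>

definition tchild :: "'a set set \<Rightarrow> 'a set \<Rightarrow> 'a set \<Rightarrow> bool" where
  "tchild Sys X Y \<longleftrightarrow> X \<in> Sys \<and> Y \<in> Sys \<and> X \<subset> Y \<and> \<not> (\<exists>Z\<in>Sys. X \<subset> Z \<and> Z \<subset> Y)"

text \<open>tanc Sys X Y: Y is an ancestor of X (reflexive: every node is its own ancestor).\<close>

definition tanc :: "'a set set \<Rightarrow> 'a set \<Rightarrow> 'a set \<Rightarrow> bool" where
  "tanc Sys X Y \<longleftrightarrow> X \<in> Sys \<and> (tchild Sys)\<^sup>*\<^sup>* X Y"

definition inner_node :: "'a set set \<Rightarrow> 'a set \<Rightarrow> bool" where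
  "inner_node Sys X \<longleftrightarrow> X \<in> Sys \<and> (\<exists>Y. tchild Sys Y X)"

definition is_lca :: "'a set set \<Rightarrow> 'a set \<Rightarrow> 'a set \<Rightarrow> 'a set \<Rightarrow> bool" where
  "is_lca Sys P Q W \<longleftrightarrow> tanc Sys P W \<and> tanc Sys Q W \<and>
     (\<forall>Z. tanc Sys P Z \<and> tanc Sys Q Z \<longrightarrow> tanc Sys W Z)"

definition on_path :: "'a set set \<Rightarrow> 'a set \<Rightarrow> 'a set \<Rightarrow> 'a set \<Rightarrow> bool" where
  "on_path Sys P Q Z \<longleftrightarrow> (\<exists>W. is_lca Sys P Q W \<and> tanc Sys Z W \<and>
     (tanc Sys P Z \<or> tanc Sys Q Z))"

text \<open>Leaves of the laminar tree are the singletons, identified with elements of U.\<close>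

definition bicolouring :: "'a set \<Rightarrow> 'a set \<Rightarrow> 'a set \<Rightarrow> bool" where
  "bicolouring U A B \<longleftrightarrow> A \<subseteq> U \<and> B \<subseteq> U \<and> A \<inter> B = {} \<and> card A = card B"

text \<open>(pi, sigma) is a pair of injections from the set Sp of inner nodes to the leaves
  which identifies Sp and has unique request.\<close>

definition identifying_pair ::
  "'a set \<Rightarrow> 'a set set \<Rightarrow> 'a set set \<Rightarrow> ('a set \<Rightarrow> 'a) \<Rightarrow> ('a set \<Rightarrow> 'a) \<Rightarrow> bool" where
  "identifying_pair U Sys Sp \<pi> \<sigma> \<longleftrightarrow>
     (\<forall>s\<in>Sp. inner_node Sys s) \<and>
     inj_on \<pi> Sp \<and> inj_on \<sigma> Sp \<and> \<pi> ` Sp \<subseteq> U \<and> \<sigma> ` Sp \<subseteq> U \<and>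
     (\<forall>s\<in>Sp. is_lca Sys {\<pi> s} {\<sigma> s} s) \<and>
     (\<forall>x. \<forall>s\<in>Sp. \<forall>t\<in>Sp. on_path Sys {\<pi> s} {\<sigma> s} x \<and> on_path Sys {\<pi> t} {\<sigma> t} x
        \<longrightarrow> s = t)"

definition identifies :: "'a set \<Rightarrow> 'a set set \<Rightarrow> 'a set \<Rightarrow> 'a set \<Rightarrow> 'a set set \<Rightarrow> bool" where
  "identifies U Sys A B Sp \<longleftrightarrow>
     (\<exists>\<pi> \<sigma>. identifying_pair U Sys Sp \<pi> \<sigma> \<and> \<pi> ` Sp = A \<and> \<sigma> ` Sp = B)"

text \<open>a is the A-representative of s (the pair is unique, so this is well-defined).\<close>

definition A_representative ::
  "'a set \<Rightarrow> 'a set set \<Rightarrow> 'a set \<Rightarrow> 'a set \<Rightarrow> 'a set set \<Rightarrow> 'a set \<Rightarrow> 'a \<Rightarrow> bool" where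
  "A_representative U Sys A B Sp s a \<longleftrightarrow> s \<in> Sp \<and>
     (\<exists>\<pi> \<sigma>. identifying_pair U Sys Sp \<pi> \<sigma> \<and> \<pi> ` Sp = A \<and> \<sigma> ` Sp = B \<and> \<pi> s = a)"

end

theory Submission
  imports Defs
begin

definition Imp :: "cmso2 \<Rightarrow> cmso2 \<Rightarrow> cmso2" where "Imp p q = FOr (FNot p) q"
definition Iff :: "cmso2 \<Rightarrow> cmso2 \<Rightarrow> cmso2" where "Iff p q = FAnd (Imp p q) (Imp q p)"
definition All1 :: "nat \<Rightarrow> cmso2 \<Rightarrow> cmso2" where "All1 i p = FNot (FExFO i (FNot p))"
definition All2 :: "nat \<Rightarrow> cmso2 \<Rightarrow> cmso2" where "All2 i p = FNot (FExSO i (FNot p))"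
definition Sub :: "nat \<Rightarrow> nat \<Rightarrow> cmso2" where "Sub j k = All1 1 (Imp (FMem 1 j) (FMem 1 k))"
definition EvC :: "nat \<Rightarrow> cmso2" where
  "EvC j = FExSO 2 (FAnd (All1 1 (Iff (FMem 1 2) (FAnd (FMem 1 j) (FOr (FA 1) (FB 1))))) (FEven 2))"
definition Phi :: cmso2 where
  "Phi = FAnd (FSet 0) (FAnd (EvC 0) (FAnd (FA 0) (FAnd (FMem 0 0)
     (All2 1 (Imp (FAnd (FSet 1) (FAnd (FMem 0 1) (FAnd (Sub 1 0) (FNot (Sub 0 1))))) (FNot (EvC 1)))))))"

lemma sat_Imp[simp]: "sat U Sys RA RB v V (Imp p q) = (sat U Sys RA RB v V p \<longrightarrow> sat U Sys RA RB v V q)"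
  by (simp add: Imp_def)
lemma sat_Iff[simp]: "sat U Sys RA RB v V (Iff p q) = (sat U Sys RA RB v V p \<longleftrightarrow> sat U Sys RA RB v V q)"
  by (auto simp add: Iff_def)
lemma sat_All1[simp]: "sat U Sys RA RB v V (All1 i p) = (\<forall>a\<in>U. sat U Sys RA RB (v(i:=a)) V p)"
  by (simp add: All1_def)
lemma sat_All2[simp]: "sat U Sys RA RB v V (All2 i p) = (\<forall>X. X \<subseteq> U \<longrightarrow> sat U Sys RA RB v (V(i:=X)) p)"
  by (simp add: All2_def)
lemma sat_Sub[simp]: "V j \<subseteq> U \<Longrightarrow> sat U Sys RA RB v V (Sub j k) = (V j \<subseteq> V k)"
  by (auto simp add: Sub_def)
lemma sat_EvC[simp]:
  assumes "j \<noteq> 2" "RA \<union> RB \<subseteq> U"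
  shows "sat U Sys RA RB v V (EvC j) = even (card (V j \<inter> (RA \<union> RB)))"
proof
  assume "sat U Sys RA RB v V (EvC j)"
  then obtain Z where Z: "Z \<subseteq> U" "\<forall>x\<in>U. (x \<in> Z) = (x \<in> V j \<and> (x \<in> RA \<or> x \<in> RB))" "even (card Z)"
    using assms by (auto simp add: EvC_def)
  have "Z = V j \<inter> (RA \<union> RB)" using Z(1,2) assms(2) by blast
  then show "even (card (V j \<inter> (RA \<union> RB)))" using Z(3) by simp
next
  assume "even (card (V j \<inter> (RA \<union> RB)))"
  then show "sat U Sys RA RB v V (EvC j)" using assms
    unfolding EvC_def by (auto intro!: exI[of _ "V j \<inter> (RA \<union> RB)"])
qed

lemma sat_Phi:
  assumes "v 0 = a" "V 0 = X" "X \<subseteq> U" "A \<union> B \<subseteq> U"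
  shows "sat U Sys A B v V Phi = (X \<in> Sys \<and> even (card (X \<inter> (A \<union> B))) \<and> a \<in> A \<and> a \<in> X \<and>
     (\<forall>Y. Y \<subseteq> U \<longrightarrow> Y \<in> Sys \<longrightarrow> a \<in> Y \<longrightarrow> Y \<subseteq> X \<longrightarrow> \<not> X \<subseteq> Y \<longrightarrow> odd (card (Y \<inter> (A \<union> B)))))"
  using assms by (auto simp add: Phi_def)

lemma rtc_sub: "(tchild Sys)\<^sup>*\<^sup>* X Y \<Longrightarrow> X \<subseteq> Y"
  by (induction rule: rtranclp_induct) (auto simp: tchild_def)

lemma rtc_mem: "(tchild Sys)\<^sup>*\<^sup>* X Y \<Longrightarrow> X \<in> Sys \<Longrightarrow> Y \<in> Sys"
  by (induction rule: rtranclp_induct) (auto simp: tchild_def)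

lemma tanc_back:
  assumes "finite Y" "X \<in> Sys" "Y \<in> Sys" "X \<subseteq> Y"
  shows "(tchild Sys)\<^sup>*\<^sup>* X Y"
  using assms
proof (induction "card (Y - X)" arbitrary: X rule: less_induct)
  case less
  show ?case
  proof (cases "X = Y")
    case True thus ?thesis by simp
  next
    case False
    define M where "M = {Z \<in> Sys. X \<subset> Z \<and> Z \<subseteq> Y}"
    have YM: "Y \<in> M" using less.prems False M_def by blast
    have finM: "finite M" unfolding M_def
      by (rule finite_subset[of _ "Pow Y"]) (auto simp: \<open>finite Y\<close>)
    obtain Z where ZM: "Z \<in> M" and Zmin: "\<not> (\<exists>Z'\<in>M. Z' < Z)"
      using ex_min_if_finite[OF finM, of] YM by (metis empty_iff)
    have Z1: "Z \<in> Sys" "X \<subset> Z" "Z \<subseteq> Y" using ZM unfolding M_def by blast+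
    have Z2: "\<not> (\<exists>Z'\<in>Sys. X \<subset> Z' \<and> Z' \<subset> Z)"
    proof
      assume "\<exists>Z'\<in>Sys. X \<subset> Z' \<and> Z' \<subset> Z"
      then obtain Z' where "Z' \<in> Sys" "X \<subset> Z'" "Z' \<subset> Z" by blast
      then have "Z' \<in> M" "Z' < Z" using Z1(3) unfolding M_def by auto
      then show False using Zmin by blast
    qed
    have tc: "tchild Sys X Z" unfolding tchild_def using Z1 Z2 less.prems(2) by blast
    have ps: "Y - Z \<subset> Y - X" using ZM unfolding M_def by blast
    have "card (Y - Z) < card (Y - X)" by (rule psubset_card_mono[OF _ ps]) (simp add: \<open>finite Y\<close>)
    moreover have "finite Y" "Z \<in> Sys" "Y \<in> Sys" "Z \<subseteq> Y" using less.prems ZM unfolding M_def by auto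
    ultimately have rZ: "(tchild Sys)\<^sup>*\<^sup>* Z Y" using less.hyps by blast
    show ?thesis by (rule converse_rtranclp_into_rtranclp[OF tc rZ])
  qed
qed

lemma tanc_iff:
  assumes "set_system U Sys"
  shows "tanc Sys X Y \<longleftrightarrow> X \<in> Sys \<and> Y \<in> Sys \<and> X \<subseteq> Y"
proof
  assume "tanc Sys X Y" then show "X \<in> Sys \<and> Y \<in> Sys \<and> X \<subseteq> Y"
    unfolding tanc_def using rtc_sub rtc_mem by blast
next
  assume h: "X \<in> Sys \<and> Y \<in> Sys \<and> X \<subseteq> Y"
  have "finite Y" using assms h unfolding set_system_def by (meson PowD finite_subset subsetD)
  then show "tanc Sys X Y" unfolding tanc_def using h tanc_back by blast
qed

locale ictx =
  fixes U :: "'a set" and Sys A B Sp and \<pi> \<sigma> :: "'a set \<Rightarrow> 'a"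
  assumes lam: "laminar U Sys" and bic: "bicolouring U A B"
    and idp: "identifying_pair U Sys Sp \<pi> \<sigma>" and imA: "\<pi> ` Sp = A" and imB: "\<sigma> ` Sp = B"
begin

lemma ss: "set_system U Sys" using lam laminar_def by blast

lemma finU: "finite U" and SysP: "Sys \<subseteq> Pow U" and sing: "\<And>x. x \<in> U \<Longrightarrow> {x} \<in> Sys"
  using ss unfolding set_system_def by auto

lemma ta: "tanc Sys X Y \<longleftrightarrow> X \<in> Sys \<and> Y \<in> Sys \<and> X \<subseteq> Y"
  using tanc_iff[OF ss] .

lemma cmp: "X \<in> Sys \<Longrightarrow> Y \<in> Sys \<Longrightarrow> x \<in> X \<Longrightarrow> x \<in> Y \<Longrightarrow> X \<subseteq> Y \<or> Y \<subseteq> X"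
  using lam unfolding laminar_def overlap_def by blast

lemma SpSys: "s \<in> Sp \<Longrightarrow> s \<in> Sys"
  using idp unfolding identifying_pair_def inner_node_def by blast

lemma AB: "A \<subseteq> U" "B \<subseteq> U" "A \<inter> B = {}"
  using bic unfolding bicolouring_def by auto

lemma piU: "s \<in> Sp \<Longrightarrow> \<pi> s \<in> U" and sigU: "s \<in> Sp \<Longrightarrow> \<sigma> s \<in> U"
  using idp unfolding identifying_pair_def by auto

lemma lca: "s \<in> Sp \<Longrightarrow> is_lca Sys {\<pi> s} {\<sigma> s} s"
  using idp unfolding identifying_pair_def by auto

lemma in_s: "s \<in> Sp \<Longrightarrow> \<pi> s \<in> s \<and> \<sigma> s \<in> s"
  using lca unfolding is_lca_def ta by auto

lemma minl: "s \<in> Sp \<Longrightarrow> Z \<in> Sys \<Longrightarrow> \<pi> s \<in> Z \<Longrightarrow> \<sigma> s \<in> Z \<Longrightarrow> s \<subseteq> Z"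
  using lca[of s] sing[OF piU[of s]] sing[OF sigU[of s]] unfolding is_lca_def ta by auto

lemma onp: "s \<in> Sp \<Longrightarrow> Z \<in> Sys \<Longrightarrow> Z \<subseteq> s \<Longrightarrow> \<pi> s \<in> Z \<or> \<sigma> s \<in> Z \<Longrightarrow> on_path Sys {\<pi> s} {\<sigma> s} Z"
  unfolding on_path_def using lca[of s] sing[OF piU[of s]] sing[OF sigU[of s]] SpSys[of s]
  by (auto simp: ta)

lemma uniq: "s \<in> Sp \<Longrightarrow> t \<in> Sp \<Longrightarrow> Z \<in> Sys \<Longrightarrow> Z \<subseteq> s \<Longrightarrow> Z \<subseteq> t \<Longrightarrow>
   \<pi> s \<in> Z \<or> \<sigma> s \<in> Z \<Longrightarrow> \<pi> t \<in> Z \<or> \<sigma> t \<in> Z \<Longrightarrow> s = t"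
  using onp[of s Z] onp[of t Z] idp unfolding identifying_pair_def by blast

lemma finSp: "finite Sp"
proof -
  have "Sp \<subseteq> Pow U" using SpSys SysP by blast
  then show ?thesis using finU by (meson finite_Pow_iff finite_subset)
qed

definition P :: "'a set \<Rightarrow> 'a set" where
  "P Z = \<pi> ` {s \<in> Sp. s \<subseteq> Z} \<union> \<sigma> ` {s \<in> Sp. s \<subseteq> Z}"

lemma injs: "inj_on \<pi> Sp" "inj_on \<sigma> Sp" using idp unfolding identifying_pair_def by auto

lemma evenP: "even (card (P Z))"
proof -
  let ?Q = "{s \<in> Sp. s \<subseteq> Z}"
  have fQ: "finite ?Q" using finSp by simp
  have d: "\<pi> ` ?Q \<inter> \<sigma> ` ?Q = {}" using AB(3) imA imB by blast
  have "card (P Z) = card (\<pi> ` ?Q) + card (\<sigma> ` ?Q)"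
    unfolding P_def by (rule card_Un_disjoint) (use fQ d in auto)
  also have "\<dots> = card ?Q + card ?Q"
    using injs by (simp add: card_image inj_on_subset[of _ Sp])
  finally show ?thesis by simp
qed

lemma odd_iff:
  assumes Z: "Z \<in> Sys"
  shows "odd (card (Z \<inter> (A \<union> B))) \<longleftrightarrow> (\<exists>s\<in>Sp. Z \<subset> s \<and> (\<pi> s \<in> Z \<or> \<sigma> s \<in> Z))"
proof (cases "\<exists>s\<in>Sp. Z \<subset> s \<and> (\<pi> s \<in> Z \<or> \<sigma> s \<in> Z)")
  case True
  then obtain s0 where s0: "s0 \<in> Sp" "Z \<subset> s0" "\<pi> s0 \<in> Z \<or> \<sigma> s0 \<in> Z" by blast
  define e where "e = (if \<pi> s0 \<in> Z then \<pi> s0 else \<sigma> s0)"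
  have notboth: "\<not> (\<pi> s0 \<in> Z \<and> \<sigma> s0 \<in> Z)" using minl[OF s0(1) Z] s0(2) by blast
  have eq: "Z \<inter> (A \<union> B) = insert e (P Z)"
  proof
    show "Z \<inter> (A \<union> B) \<subseteq> insert e (P Z)"
    proof
      fix x assume x: "x \<in> Z \<inter> (A \<union> B)"
      then obtain t where t: "t \<in> Sp" "x = \<pi> t \<or> x = \<sigma> t" using imA imB by blast
      have xt: "x \<in> t" using t in_s by blast
      show "x \<in> insert e (P Z)"
      proof (cases "t \<subseteq> Z")
        case True then show ?thesis using t unfolding P_def by blast
      next
        case False
        then have "Z \<subseteq> t" using cmp[OF SpSys[OF t(1)] Z xt] x by blast
        then have "t = s0" using uniq[OF t(1) s0(1) Z _ _ _ s0(3)] s0(2) t(2) x by blast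
        then show ?thesis using t(2) x notboth unfolding e_def by auto
      qed
    qed
  next
    have "e \<in> Z \<inter> (A \<union> B)" using s0 imA imB unfolding e_def by auto
    moreover have "P Z \<subseteq> Z \<inter> (A \<union> B)" unfolding P_def using in_s imA imB by blast
    ultimately show "insert e (P Z) \<subseteq> Z \<inter> (A \<union> B)" by blast
  qed
  have enot: "e \<notin> P Z"
  proof
    assume "e \<in> P Z"
    then obtain t where t: "t \<in> Sp" "t \<subseteq> Z" "e = \<pi> t \<or> e = \<sigma> t" unfolding P_def by blast
    have "t = s0"
    proof (cases "\<pi> s0 \<in> Z")
      case True
      then have "e = \<pi> s0" unfolding e_def by simp
      moreover have "\<pi> s0 \<noteq> \<sigma> t" using AB(3) imA imB s0(1) t(1) by blast
      ultimately show ?thesis using t injs(1) s0(1) unfolding inj_on_def by metis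
    next
      case False
      then have "e = \<sigma> s0" unfolding e_def by simp
      moreover have "\<pi> t \<noteq> \<sigma> s0" using AB(3) imA imB s0(1) t(1) by blast
      ultimately show ?thesis using t injs(2) s0(1) unfolding inj_on_def by metis
    qed
    then show False using t(2) s0(2) by blast
  qed
  have "finite (P Z)" unfolding P_def using finSp by simp
  then have "card (Z \<inter> (A \<union> B)) = Suc (card (P Z))" using eq enot by simp
  then show ?thesis using True evenP by simp
next
  case False
  have eq: "Z \<inter> (A \<union> B) = P Z"
  proof
    show "Z \<inter> (A \<union> B) \<subseteq> P Z"
    proof
      fix x assume x: "x \<in> Z \<inter> (A \<union> B)"
      then obtain t where t: "t \<in> Sp" "x = \<pi> t \<or> x = \<sigma> t" using imA imB by blast
      have xt: "x \<in> t" using t in_s by blast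
      have "t \<subseteq> Z"
      proof (rule ccontr)
        assume "\<not> t \<subseteq> Z"
        then have "Z \<subset> t" using cmp[OF SpSys[OF t(1)] Z xt] x by blast
        then show False using False t x by blast
      qed
      then show "x \<in> P Z" using t unfolding P_def by blast
    qed
  next
    show "P Z \<subseteq> Z \<inter> (A \<union> B)" unfolding P_def using in_s imA imB by blast
  qed
  then show ?thesis using False evenP by simp
qed

lemma even_Sp: "s \<in> Sp \<Longrightarrow> even (card (s \<inter> (A \<union> B)))"
  using odd_iff[OF SpSys[of s]] uniq[of s _ s] in_s[of s] SpSys[of s] by blast

end

lemma main:
  assumes lam: "laminar U Sys" and bic: "bicolouring U A B" and idf: "identifies U Sys A B Sp"
    and h: "a \<in> U" "X \<subseteq> U" "v 0 = a" "V 0 = X"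
  shows "sat U Sys A B v V Phi \<longleftrightarrow> inner_node Sys X \<and> X \<in> Sp \<and> A_representative U Sys A B Sp X a"
proof -
  obtain \<pi> \<sigma> where p: "identifying_pair U Sys Sp \<pi> \<sigma>" "\<pi> ` Sp = A" "\<sigma> ` Sp = B"
    using idf unfolding identifies_def by blast
  interpret I: ictx U Sys A B Sp \<pi> \<sigma> using lam bic p by unfold_locales
  have ABU: "A \<union> B \<subseteq> U" using I.AB by blast
  show ?thesis
  proof
    assume "sat U Sys A B v V Phi"
    then have S: "X \<in> Sys" "even (card (X \<inter> (A \<union> B)))" "a \<in> A" "a \<in> X"
      "\<And>Y. Y \<subseteq> U \<Longrightarrow> Y \<in> Sys \<Longrightarrow> a \<in> Y \<Longrightarrow> Y \<subseteq> X \<Longrightarrow> \<not> X \<subseteq> Y \<Longrightarrow> odd (card (Y \<inter> (A \<union> B)))"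
      using sat_Phi[where v=v and V=V and U=U and A=A and B=B and Sys=Sys and a=a and X=X, OF h(3,4,2) ABU] by auto
    obtain t where t: "t \<in> Sp" "a = \<pi> t" using S(3) p(2) by blast
    have at: "a \<in> t" using I.in_s t by blast
    have "t = X"
    proof (rule ccontr)
      assume ne: "t \<noteq> X"
      from I.cmp[OF I.SpSys[OF t(1)] S(1) at S(4)] show False
      proof
        assume "t \<subseteq> X"
        then have "odd (card (t \<inter> (A \<union> B)))"
          using S(5)[of t] ne I.SpSys[OF t(1)] I.SysP at by blast
        then show False using I.even_Sp[OF t(1)] by simp
      next
        assume "X \<subseteq> t"
        then have "odd (card (X \<inter> (A \<union> B)))"
          using I.odd_iff[OF S(1)] ne t S(4) by blast
        then show False using S(2) by simp
      qed
    qed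
    then show "inner_node Sys X \<and> X \<in> Sp \<and> A_representative U Sys A B Sp X a"
      using t p unfolding A_representative_def identifying_pair_def by blast
  next
    assume R: "inner_node Sys X \<and> X \<in> Sp \<and> A_representative U Sys A B Sp X a"
    then obtain \<pi>' \<sigma>' where q: "identifying_pair U Sys Sp \<pi>' \<sigma>'" "\<pi>' ` Sp = A" "\<sigma>' ` Sp = B" "\<pi>' X = a"
      unfolding A_representative_def by blast
    interpret J: ictx U Sys A B Sp \<pi>' \<sigma>' using lam bic q by unfold_locales
    have XS: "X \<in> Sp" using R by blast
    have X1: "X \<in> Sys" using J.SpSys XS by blast
    have ev: "even (card (X \<inter> (A \<union> B)))" using J.even_Sp[OF XS] .
    have aA: "a \<in> A" using q XS by blast
    have aX: "a \<in> X" using J.in_s[OF XS] q(4) by simp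
    have Y: "odd (card (Y \<inter> (A \<union> B)))" if "Y \<in> Sys" "a \<in> Y" "Y \<subseteq> X" "\<not> X \<subseteq> Y" for Y
      using J.odd_iff[OF that(1)] that XS q(4) by blast
    show "sat U Sys A B v V Phi"
      using sat_Phi[where v=v and V=V and U=U and A=A and B=B and Sys=Sys and a=a and X=X, OF h(3,4,2) ABU] X1 ev aA aX Y by blast
  qed
qed

theorem lemma3p11:
  "\<exists>\<phi> :: cmso2. \<forall>(U :: nat set) Sys A B Sp.
     laminar U Sys \<and> bicolouring U A B \<and> identifies U Sys A B Sp \<longrightarrow>
     (\<forall>a X v V. a \<in> U \<and> X \<subseteq> U \<and> v 0 = a \<and> V 0 = X \<longrightarrow>
        (sat U Sys A B v V \<phi> \<longleftrightarrow>
           inner_node Sys X \<and> X \<in> Sp \<and> A_representative U Sys A B Sp X a))"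
  apply (rule exI[of _ Phi])
  apply (intro allI impI)
  apply (elim conjE)
  apply (rule main)
        apply assumption+
  done

end
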